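(* Let $(X,d)$ be a compact metric space and $f\colon X\to X$ a continuous map. If $f$ has the shadowing property around $\overline{M(f)}$, then $f|_{\overline{M(f)}}\colon\overline{M(f)}\to\overline{M(f)}$ has the shadowing property.
   Context: $M(f)$ is the set of minimal points: $x$ such that $f$ restricted to $\overline{\{f^n(x):n\ge0\}}$ is minimal. For $S\subset X$, $f$ has the shadowing property around $S$ if for every $\epsilon>0$ there is $\delta>0$ such that every sequence $(x_i)_{i\ge0}\subset S$ with $d(f(x_i),x_{i+1})\le\delta$ for all $i$ admits $x\in X$ with $d(x_i,f^i(x))\le\epsilon$ for all $i$. The shadowing property for a map $g\colon Y\to Y$ is the same with $S=Y$ and the shadowing point required in $Y$. *)

theory Defs
  imports "HOL-Analysis.Analysis"
begin

definition orbit :: "('a \<Rightarrow> 'a) \<Rightarrow> 'a \<Rightarrow> 'a set" where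
  "orbit f x = {(f ^^ n) x | n. True}"

definition minimal_on :: "('a::metric_space \<Rightarrow> 'a) \<Rightarrow> 'a set \<Rightarrow> bool" where
  "minimal_on f Y \<longleftrightarrow> Y \<noteq> {} \<and> f ` Y \<subseteq> Y \<and>
     (\<forall>Z. Z \<subseteq> Y \<and> Z \<noteq> {} \<and> closed Z \<and> f ` Z \<subseteq> Z \<longrightarrow> Z = Y)"

definition minimal_points :: "'a set \<Rightarrow> ('a::metric_space \<Rightarrow> 'a) \<Rightarrow> 'a set" where
  "minimal_points X f = {x \<in> X. minimal_on f (closure (orbit f x))}"

definition shadowing_around :: "'a set \<Rightarrow> ('a::metric_space \<Rightarrow> 'a) \<Rightarrow> 'a set \<Rightarrow> bool" where
  "shadowing_around X f S \<longleftrightarrow>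
    (\<forall>\<epsilon>>0. \<exists>\<delta>>0. \<forall>xs::nat \<Rightarrow> 'a.
        (\<forall>i. xs i \<in> S) \<and> (\<forall>i. dist (f (xs i)) (xs (Suc i)) \<le> \<delta>) \<longrightarrow>
        (\<exists>x\<in>X. \<forall>i. dist (xs i) ((f ^^ i) x) \<le> \<epsilon>))"

definition shadowing :: "'a set \<Rightarrow> ('a::metric_space \<Rightarrow> 'a) \<Rightarrow> bool" where
  "shadowing Y g \<longleftrightarrow> shadowing_around Y g Y"

end

theory Submission
  imports Defs
begin

context
  fixes X :: "'a::metric_space set" and f :: "'a \<Rightarrow> 'a"
  assumes cX: "compact X" and cf: "continuous_on X f" and fX: "f ` X \<subseteq> X"
begin

lemma funpow_in: "x \<in> X \<Longrightarrow> (f ^^ n) x \<in> X"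
  by (induction n) (use fX in auto)

lemma funpow_cont: "continuous_on X (f ^^ n)"
proof (induction n)
  case 0 then show ?case by (simp add: continuous_on_id)
next
  case (Suc n)
  have "continuous_on X (f \<circ> (f ^^ n))"
    by (rule continuous_on_compose[OF Suc]) (meson continuous_on_subset cf funpow_in image_subsetI)
  then show ?case by simp
qed

lemma orbit_sub: "x \<in> X \<Longrightarrow> orbit f x \<subseteq> X"
  unfolding orbit_def using funpow_in by auto

lemma orbit_self: "x \<in> orbit f x"
  unfolding orbit_def by (auto intro: exI[of _ 0])

lemma orbit_inv: "f ` orbit f x \<subseteq> orbit f x"
proof
  fix y assume "y \<in> f ` orbit f x"
  then obtain n where "y = f ((f ^^ n) x)" unfolding orbit_def by auto
  then have "y = (f ^^ Suc n) x" by simp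
  then show "y \<in> orbit f x" unfolding orbit_def by blast
qed

lemma closed_X: "closed X" using cX compact_imp_closed by blast

lemma closure_orbit_sub: "x \<in> X \<Longrightarrow> closure (orbit f x) \<subseteq> X"
  using orbit_sub closed_X closure_minimal by blast

lemma closure_orbit_inv: "x \<in> X \<Longrightarrow> f ` closure (orbit f x) \<subseteq> closure (orbit f x)"
proof (rule image_closure_subset)
  assume "x \<in> X"
  show "continuous_on (closure (orbit f x)) f" using continuous_on_subset[OF cf closure_orbit_sub[OF \<open>x \<in> X\<close>]] .
  show "f ` orbit f x \<subseteq> closure (orbit f x)" using orbit_inv closure_subset by blast
qed simp

lemma minimal_sub_M:
  assumes K: "minimal_on f K" "closed K" "K \<subseteq> X"
  shows "K \<subseteq> minimal_points X f"
proof
  fix u assume u: "u \<in> K"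
  have uX: "u \<in> X" using u K by auto
  have oK: "orbit f u \<subseteq> K"
  proof
    fix y assume "y \<in> orbit f u"
    then obtain n where "y = (f ^^ n) u" unfolding orbit_def by auto
    moreover have "(f ^^ n) u \<in> K" for n
      by (induction n) (use u K in \<open>auto simp: minimal_on_def\<close>)
    ultimately show "y \<in> K" by simp
  qed
  have cK: "closure (orbit f u) \<subseteq> K" using oK K closure_minimal by blast
  have eq: "closure (orbit f u) = K"
    using K(1) cK closure_orbit_inv[OF uX] orbit_self[of u] closure_subset[of "orbit f u"]
    unfolding minimal_on_def by blast
  show "u \<in> minimal_points X f"
    unfolding minimal_points_def using uX eq K(1) by simp
qed

lemma fin_chain_min:
  assumes "finite F" "F \<noteq> {}" "\<forall>a\<in>F. \<forall>b\<in>F. a \<subseteq> b \<or> b \<subseteq> a"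
  shows "\<exists>m\<in>F. \<forall>b\<in>F. m \<subseteq> (b::'b set)"
  using assms
proof (induction F rule: finite_ne_induct)
  case (singleton x) then show ?case by auto
next
  case (insert x F)
  then obtain m where m: "m \<in> F" "\<forall>b\<in>F. m \<subseteq> b" by auto
  have "x \<subseteq> m \<or> m \<subseteq> x" using insert.prems m(1) by auto
  then show ?case using m by blast
qed

lemma M_in_X: "p \<in> minimal_points X f \<Longrightarrow> p \<in> X"
  unfolding minimal_points_def by auto

lemma M_min: "p \<in> minimal_points X f \<Longrightarrow> minimal_on f (closure (orbit f p))"
  unfolding minimal_points_def by auto

lemma f_M: "p \<in> minimal_points X f \<Longrightarrow> f p \<in> minimal_points X f"
proof -
  assume p: "p \<in> minimal_points X f"
  have "f p \<in> orbit f p" using orbit_inv orbit_self by blast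
  then have "f p \<in> closure (orbit f p)" using closure_subset by blast
  then show ?thesis
    using minimal_sub_M[OF M_min[OF p] _ closure_orbit_sub[OF M_in_X[OF p]]] by auto
qed

lemma funpow_M: "p \<in> minimal_points X f \<Longrightarrow> (f ^^ n) p \<in> minimal_points X f"
  by (induction n) (auto intro: f_M)

lemma orbit_funpow: "orbit f ((f ^^ m) p) \<subseteq> orbit f p"
proof
  fix y assume "y \<in> orbit f ((f ^^ m) p)"
  then obtain n where "y = (f ^^ n) ((f ^^ m) p)" unfolding orbit_def by auto
  then have "y = (f ^^ (n + m)) p" by (simp only: funpow_add comp_def)
  then show "y \<in> orbit f p" unfolding orbit_def by blast
qed

lemma recur:
  assumes p: "p \<in> minimal_points X f" and th: "\<theta> > 0"
  shows "\<exists>k\<ge>2. dist ((f ^^ k) p) p < \<theta>"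
proof -
  let ?K = "closure (orbit f p)"
  let ?q = "(f ^^ 2) p"
  have pX: "p \<in> X" using M_in_X[OF p] .
  have qX: "?q \<in> X" using funpow_in[OF pX] .
  have sub: "closure (orbit f ?q) \<subseteq> ?K" using orbit_funpow closure_mono by blast
  have "closure (orbit f ?q) = ?K"
    using M_min[OF p] sub closure_orbit_inv[OF qX] orbit_self[of ?q] closure_subset[of "orbit f ?q"]
    unfolding minimal_on_def by blast
  then have "p \<in> closure (orbit f ?q)" using orbit_self closure_subset by blast
  then obtain y where y: "y \<in> orbit f ?q" "dist y p < \<theta>" using th closure_approachable by metis
  then obtain n where "y = (f ^^ n) ?q" unfolding orbit_def by auto
  then have "y = (f ^^ (n + 2)) p" by (simp only: funpow_add comp_def)
  then show ?thesis using y by (intro exI[of _ "n+2"]) auto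
qed

lemma exists_minimal:
  assumes T: "compact T" "T \<noteq> {}" "T \<subseteq> X" "f ` T \<subseteq> T"
  shows "\<exists>K. K \<subseteq> T \<and> closed K \<and> minimal_on f K"
proof -
  define Fam where "Fam = {Z. Z \<subseteq> T \<and> Z \<noteq> {} \<and> closed Z \<and> f ` Z \<subseteq> Z}"
  define A where "A = (\<lambda>Z. T - Z) ` Fam"
  have cT: "closed T" using T compact_imp_closed by blast
  have "\<forall>C\<in>chains A. \<exists>U\<in>A. \<forall>c\<in>C. c \<subseteq> U"
  proof
    fix C assume C: "C \<in> chains A"
    define Zs where "Zs = (\<lambda>c. T - c) ` C"
    have ZsF: "Zs \<subseteq> Fam"
    proof
      fix Z assume "Z \<in> Zs"
      then obtain c where c: "c \<in> C" "Z = T - c" unfolding Zs_def by auto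
      then obtain Z' where "Z' \<in> Fam" "c = T - Z'" using C unfolding chains_def A_def by auto
      moreover then have "T - (T - Z') = Z'" unfolding Fam_def by auto
      ultimately show "Z \<in> Fam" using c by simp
    qed
    have chZ: "\<forall>a\<in>Zs. \<forall>b\<in>Zs. a \<subseteq> b \<or> b \<subseteq> a"
      using C unfolding Zs_def chains_def chain_subset_def by blast
    define I where "I = T \<inter> \<Inter>Zs"
    have "T \<inter> \<Inter>Zs \<noteq> {}"
    proof (rule compact_imp_fip[OF T(1)])
      show "\<And>Z. Z \<in> Zs \<Longrightarrow> closed Z" using ZsF unfolding Fam_def by auto
      fix F' assume F': "finite F'" "F' \<subseteq> Zs"
      show "T \<inter> \<Inter>F' \<noteq> {}"
      proof (cases "F' = {}")
        case True then show ?thesis using T by simp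
      next
        case False
        then obtain m where m: "m \<in> F'" "\<forall>b\<in>F'. m \<subseteq> b"
          using fin_chain_min[OF F'(1) False] chZ F'(2) by blast
        have "m \<in> Fam" using m F' ZsF by auto
        then have "m \<subseteq> T \<inter> \<Inter>F'" "m \<noteq> {}" using m unfolding Fam_def by auto
        then show ?thesis by blast
      qed
    qed
    moreover have "f ` I \<subseteq> I"
    proof
      fix y assume "y \<in> f ` I"
      then obtain x where x: "x \<in> I" "y = f x" by auto
      have "y \<in> T" using x T(4) unfolding I_def by auto
      moreover have "y \<in> Z" if "Z \<in> Zs" for Z
        using that x ZsF unfolding I_def Fam_def by blast
      ultimately show "y \<in> I" unfolding I_def by auto
    qed
    moreover have "closed I" unfolding I_def using ZsF cT unfolding Fam_def by (auto intro!: closed_Int closed_Inter)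
    ultimately have IF: "I \<in> Fam"
      unfolding Fam_def I_def by auto
    show "\<exists>U\<in>A. \<forall>c\<in>C. c \<subseteq> U"
    proof (intro bexI[of _ "T - I"] ballI)
      show "T - I \<in> A" using IF unfolding A_def by auto
      fix c assume "c \<in> C"
      then have "c \<subseteq> T" using C unfolding chains_def A_def by auto
      moreover have "T - c \<in> Zs" using \<open>c \<in> C\<close> unfolding Zs_def by auto
      ultimately show "c \<subseteq> T - I" unfolding I_def by blast
    qed
  qed
  then obtain Mx where Mx: "Mx \<in> A" "\<forall>Y\<in>A. Mx \<subseteq> Y \<longrightarrow> Y = Mx"
    using Zorn_Lemma2[of A] by blast
  then obtain K where K: "K \<in> Fam" "Mx = T - K" unfolding A_def by auto
  have "minimal_on f K"
    unfolding minimal_on_def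
  proof (intro conjI allI impI)
    show "K \<noteq> {}" "f ` K \<subseteq> K" using K unfolding Fam_def by auto
    fix Z assume Z: "Z \<subseteq> K \<and> Z \<noteq> {} \<and> closed Z \<and> f ` Z \<subseteq> Z"
    then have "Z \<in> Fam" using K unfolding Fam_def by auto
    then have "T - Z \<in> A" unfolding A_def by auto
    moreover have "Mx \<subseteq> T - Z" using K Z by auto
    ultimately have "T - Z = T - K" using Mx K by auto
    then show "Z = K" using Z K unfolding Fam_def by auto
  qed
  then show ?thesis using K unfolding Fam_def by auto
qed

lemma periodic_shadow:
  assumes P: "P > 0" "\<forall>i. \<eta> (i + P) = \<eta> i" and z: "z \<in> X" "\<forall>i. dist (\<eta> i) ((f ^^ i) z) \<le> e"
  shows "\<exists>w \<in> minimal_points X f. \<forall>i. dist (\<eta> i) ((f ^^ i) w) \<le> e"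
proof -
  define S where "S j = {x \<in> X. \<forall>i. dist (\<eta> (i + j)) ((f ^^ i) x) \<le> e}" for j
  have per: "\<eta> (i + k * P) = \<eta> i" for i k
  proof (induction k)
    case (Suc k)
    have "i + Suc k * P = (i + k * P) + P" by simp
    then show ?case using Suc P by metis
  qed simp
  have per2: "\<eta> (i + j) = \<eta> (i + j mod P)" for i j
  proof -
    have "i + j = (i + j mod P) + (j div P) * P" by simp
    then show ?thesis using per by metis
  qed
  have Smod: "S j = S (j mod P)" for j unfolding S_def using per2 by simp
  have Sclosed: "closed (S j)" for j
  proof -
    have "S j = X \<inter> (\<Inter>i. X \<inter> (f ^^ i) -` cball (\<eta> (i + j)) e)"
      unfolding S_def by (auto simp: mem_cball)
    moreover have "closed (X \<inter> (f ^^ i) -` cball (\<eta> (i + j)) e)" for i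
      using continuous_closed_preimage[OF funpow_cont closed_X closed_cball] .
    then have "closed (\<Inter>i. X \<inter> (f ^^ i) -` cball (\<eta> (i + j)) e)" using closed_INT by blast
    ultimately show ?thesis using closed_X by (metis closed_Int)
  qed
  define T where "T = (\<Union>j<P. S j)"
  have TX: "T \<subseteq> X" unfolding T_def S_def by auto
  have "closed T" unfolding T_def using Sclosed by auto
  then have cT: "compact T" using compact_Int_closed[OF cX] TX by (metis inf.absorb2)
  have "z \<in> S 0" unfolding S_def using z by auto
  then have Tne: "T \<noteq> {}" unfolding T_def using P by auto
  have fT: "f ` T \<subseteq> T"
  proof
    fix y assume "y \<in> f ` T"
    then obtain x j where x: "x \<in> S j" "j < P" "y = f x" unfolding T_def by auto
    have "y \<in> S (Suc j)"
      unfolding S_def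
    proof (intro CollectI conjI allI)
      show "y \<in> X" using x fX unfolding S_def by auto
      fix i
      have "(f ^^ i) y = (f ^^ Suc i) x" using x by (simp add: funpow_Suc_right del: funpow.simps)
      moreover have "dist (\<eta> (Suc i + j)) ((f ^^ Suc i) x) \<le> e" using x unfolding S_def by blast
      ultimately show "dist (\<eta> (i + Suc j)) ((f ^^ i) y) \<le> e" by simp
    qed
    then have "y \<in> S (Suc j mod P)" using Smod by auto
    then show "y \<in> T" unfolding T_def using P by auto
  qed
  obtain K where K: "K \<subseteq> T" "closed K" "minimal_on f K"
    using exists_minimal[OF cT Tne TX fT] by blast
  have KM: "K \<subseteq> minimal_points X f" using minimal_sub_M K TX by auto
  obtain u where u: "u \<in> K" using K(3) unfolding minimal_on_def by auto
  then obtain j where j: "j < P" "u \<in> S j" using K unfolding T_def by auto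
  define w where "w = (f ^^ (P - j)) u"
  have Kinv: "(f ^^ n) u \<in> K" for n
    by (induction n) (use u K(3) in \<open>auto simp: minimal_on_def\<close>)
  have "w \<in> minimal_points X f" unfolding w_def using Kinv KM by auto
  moreover have "dist (\<eta> i) ((f ^^ i) w) \<le> e" for i
  proof -
    have "(f ^^ i) w = (f ^^ (i + (P - j))) u" unfolding w_def by (simp only: funpow_add comp_def)
    moreover have "\<eta> (i + (P - j) + j) = \<eta> i" using P j by simp
    ultimately show ?thesis using j unfolding S_def by (metis (no_types, lifting) mem_Collect_eq)
  qed
  ultimately show ?thesis by blast
qed

lemma chain_build:
  assumes th: "\<theta> > 0" and ga: "\<gamma> \<ge> 0"
    and "\<forall>i<N. dist (f (p i)) (p (Suc i)) \<le> \<gamma>" and "\<forall>i\<le>N. p i \<in> minimal_points X f"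
  shows "\<exists>L P. P > N \<and> (\<forall>i\<le>N. L i = p i) \<and> (\<forall>i<P. L i \<in> minimal_points X f) \<and>
     (\<forall>i. Suc i < P \<longrightarrow> dist (f (L i)) (L (Suc i)) \<le> \<theta> + \<gamma>) \<and> dist (f (L (P - 1))) (L 0) \<le> \<theta>"
  using assms(3,4)
proof (induction N arbitrary: p)
  case 0
  have p0: "p 0 \<in> minimal_points X f" using 0 by auto
  obtain k where k: "k \<ge> 2" "dist ((f ^^ k) (p 0)) (p 0) < \<theta>" using recur[OF p0 th] by blast
  define L where "L i = (f ^^ i) (p 0)" for i
  have "f (L (k - 1)) = (f ^^ k) (p 0)" unfolding L_def using k
    by (metis Suc_diff_1 funpow.simps(2) comp_apply less_le_trans pos2)
  then show ?case using k funpow_M[OF p0] ga th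
    by (intro exI[of _ L] exI[of _ k]) (auto simp: L_def)
next
  case (Suc N)
  define q where "q i = p (Suc i)" for i
  have "\<forall>i<N. dist (f (q i)) (q (Suc i)) \<le> \<gamma>" "\<forall>i\<le>N. q i \<in> minimal_points X f"
    using Suc.prems unfolding q_def by auto
  from Suc.IH[OF this] obtain L' P' where L':
    "P' > N" "\<forall>i\<le>N. L' i = q i" "\<forall>i<P'. L' i \<in> minimal_points X f"
    "\<forall>i. Suc i < P' \<longrightarrow> dist (f (L' i)) (L' (Suc i)) \<le> \<theta> + \<gamma>" "dist (f (L' (P' - 1))) (L' 0) \<le> \<theta>"
    by blast
  have p0: "p 0 \<in> minimal_points X f" using Suc.prems by auto
  have jp0: "dist (f (p 0)) (p 1) \<le> \<gamma>" using Suc.prems by auto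
  have L'0: "L' 0 = p 1" using L'(2) unfolding q_def by auto
  obtain k where k: "k \<ge> 2" "dist ((f ^^ k) (p 0)) (p 0) < \<theta>" using recur[OF p0 th] by blast
  define L where "L i = (if i = 0 then p 0 else if i \<le> P' then L' (i - 1) else (f ^^ (i - P')) (p 0))" for i
  define P where "P = P' + k"
  have A: "P > Suc N" unfolding P_def using L' k by auto
  have B: "\<forall>i\<le>Suc N. L i = p i"
  proof (intro allI impI)
    fix i assume i: "i \<le> Suc N"
    show "L i = p i"
    proof (cases "i = 0")
      case False
      then have "L i = L' (i - 1)" unfolding L_def using i L'(1) by auto
      also have "\<dots> = p i" using L'(2) i False unfolding q_def by auto
      finally show ?thesis .
    qed (simp add: L_def)
  qed
  have C: "\<forall>i<P. L i \<in> minimal_points X f"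
    unfolding L_def P_def using p0 L'(3) funpow_M[OF p0] by auto
  have D: "dist (f (L i)) (L (Suc i)) \<le> \<theta> + \<gamma>" if i: "Suc i < P" for i
  proof -
    consider "i = 0" | "0 < i" "Suc i \<le> P'" | "i = P'" | "i > P'" by linarith
    then show ?thesis
    proof cases
      case 1
      then show ?thesis unfolding L_def using L'(1) L'0 jp0 th by auto
    next
      case 2
      then have "L i = L' (i - 1)" "L (Suc i) = L' (Suc (i - 1))" unfolding L_def by auto
      moreover have "Suc (i - 1) < P'" using 2 by auto
      ultimately show ?thesis using L'(4) by auto
    next
      case 3
      have P'0: "P' > 0" using L'(1) by auto
      then have "L i = L' (P' - 1)" "L (Suc i) = f (p 0)" unfolding L_def using 3 by auto
      moreover have "dist (f (L' (P' - 1))) (f (p 0)) \<le> dist (f (L' (P' - 1))) (L' 0) + dist (L' 0) (f (p 0))"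
        by (rule dist_triangle)
      moreover have "dist (L' 0) (f (p 0)) \<le> \<gamma>" using L'0 jp0 by (simp add: dist_commute)
      ultimately show ?thesis using L'(5) by auto
    next
      case 4
      then have "L (Suc i) = f (L i)" unfolding L_def by (simp add: Suc_diff_le)
      then show ?thesis using th ga by simp
    qed
  qed
  have E: "dist (f (L (P - 1))) (L 0) \<le> \<theta>"
  proof -
    have "P - 1 > P'" unfolding P_def using k by auto
    then have "L (P - 1) = (f ^^ (k - 1)) (p 0)" unfolding L_def P_def by auto
    moreover have "f ((f ^^ (k - 1)) (p 0)) = (f ^^ k) (p 0)" using k
      by (metis Suc_diff_1 funpow.simps(2) comp_apply less_le_trans pos2)
    ultimately show ?thesis using k unfolding L_def by auto
  qed
  show ?case using A B C D E by blast
qed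

lemma finite_shadow:
  assumes H: "\<forall>ys. (\<forall>i. ys i \<in> closure (minimal_points X f)) \<and> (\<forall>i. dist (f (ys i)) (ys (Suc i)) \<le> d0)
                 \<longrightarrow> (\<exists>x\<in>X. \<forall>i. dist (ys i) ((f ^^ i) x) \<le> e)"
    and pM: "\<forall>i. p i \<in> minimal_points X f" and pj: "\<forall>i. dist (f (p i)) (p (Suc i)) \<le> \<gamma>"
    and th: "\<theta> > 0" and ga: "\<gamma> \<ge> 0" and tg: "\<theta> + \<gamma> \<le> d0"
  shows "\<exists>w\<in>minimal_points X f. \<forall>i\<le>N. dist (p i) ((f ^^ i) w) \<le> e"
proof -
  obtain L P where L: "P > N" "\<forall>i\<le>N. L i = p i" "\<forall>i<P. L i \<in> minimal_points X f"
    "\<forall>i. Suc i < P \<longrightarrow> dist (f (L i)) (L (Suc i)) \<le> \<theta> + \<gamma>" "dist (f (L (P - 1))) (L 0) \<le> \<theta>"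
    using chain_build[OF th ga, of N p] pM pj by blast
  define \<eta> where "\<eta> i = L (i mod P)" for i
  have P0: "P > 0" using L by auto
  have eM: "\<eta> i \<in> closure (minimal_points X f)" for i
    unfolding \<eta>_def using L(3) P0 closure_subset by (meson subsetD mod_less_divisor)
  have ej: "dist (f (\<eta> i)) (\<eta> (Suc i)) \<le> d0" for i
  proof (cases "Suc (i mod P) = P")
    case True
    then have "\<eta> (Suc i) = L 0" "i mod P = P - 1" unfolding \<eta>_def by (auto simp: mod_Suc)
    then show ?thesis using L(5) th ga tg unfolding \<eta>_def by auto
  next
    case False
    then have "\<eta> (Suc i) = L (Suc (i mod P))" "Suc (i mod P) < P" unfolding \<eta>_def
      using P0 by (auto simp: mod_Suc) (metis Suc_lessI mod_less_divisor)
    then show ?thesis using L(4) tg unfolding \<eta>_def by fastforce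
  qed
  obtain z where z: "z \<in> X" "\<forall>i. dist (\<eta> i) ((f ^^ i) z) \<le> e" using H eM ej by blast
  have "\<forall>i. \<eta> (i + P) = \<eta> i" unfolding \<eta>_def by simp
  from periodic_shadow[OF P0 this z] obtain w where w: "w \<in> minimal_points X f" "\<forall>i. dist (\<eta> i) ((f ^^ i) w) \<le> e"
    by blast
  have "\<eta> i = p i" if "i \<le> N" for i unfolding \<eta>_def using that L by auto
  then show ?thesis using w by metis
qed

lemma limit_step:
  assumes A: "\<forall>N. \<exists>w\<in>minimal_points X f. \<forall>i\<le>N. dist (xs i) ((f ^^ i) w) \<le> e"
  shows "\<exists>x\<in>closure (minimal_points X f). \<forall>i. dist (xs i) ((f ^^ i) x) \<le> e"
proof -
  obtain w where w: "\<And>N. w N \<in> minimal_points X f" "\<And>N i. i \<le> N \<Longrightarrow> dist (xs i) ((f ^^ i) (w N)) \<le> e"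
    using A by metis
  have wX: "\<forall>n. w n \<in> X" using w M_in_X by auto
  obtain l r where lr: "l \<in> X" "strict_mono r" "(w \<circ> r) \<longlonglongrightarrow> l"
    using seq_compactE[OF compact_imp_seq_compact[OF cX] wX] by metis
  have "l \<in> closure (minimal_points X f)"
    unfolding closure_sequential using lr w by (intro exI[of _ "w \<circ> r"]) auto
  moreover have "dist (xs i) ((f ^^ i) l) \<le> e" for i
  proof -
    have t: "((\<lambda>n. (f ^^ i) ((w \<circ> r) n)) \<longlongrightarrow> (f ^^ i) l) sequentially"
      by (rule continuous_on_tendsto_compose[OF funpow_cont lr(3) lr(1)]) (use wX in auto)
    have t2: "((\<lambda>n. dist (xs i) ((f ^^ i) ((w \<circ> r) n))) \<longlongrightarrow> dist (xs i) ((f ^^ i) l)) sequentially"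
      by (intro tendsto_dist tendsto_const t)
    have ev: "eventually (\<lambda>n. dist (xs i) ((f ^^ i) ((w \<circ> r) n)) \<le> e) sequentially"
    proof (rule eventually_sequentiallyI[of i])
      fix n assume "i \<le> n"
      then have "i \<le> r n" using seq_suble[OF lr(2)] le_trans by blast
      then show "dist (xs i) ((f ^^ i) ((w \<circ> r) n)) \<le> e" using w(2) by simp
    qed
    show ?thesis using tendsto_le[OF trivial_limit_sequentially tendsto_const t2] ev by blast
  qed
  ultimately show ?thesis by blast
qed

end

theorem lemma2p2:
  fixes X :: "'a::metric_space set" and f :: "'a \<Rightarrow> 'a"
  assumes "compact X"
    and "continuous_on X f"
    and "f ` X \<subseteq> X"
    and "shadowing_around X f (closure (minimal_points X f))"
  shows "shadowing (closure (minimal_points X f)) f"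
  unfolding shadowing_def shadowing_around_def
proof (intro allI impI)
  note cX = assms(1) and cf = assms(2) and fX = assms(3)
  let ?M = "minimal_points X f"
  fix \<epsilon> :: real assume ep: "\<epsilon> > 0"
  obtain d0 where d0: "d0 > 0" "\<forall>ys. (\<forall>i. ys i \<in> closure ?M) \<and> (\<forall>i. dist (f (ys i)) (ys (Suc i)) \<le> d0)
                 \<longrightarrow> (\<exists>x\<in>X. \<forall>i. dist (ys i) ((f ^^ i) x) \<le> \<epsilon> / 2)"
  proof -
    have e2: "\<epsilon> / 2 > 0" using ep by simp
    show ?thesis using assms(4)[unfolded shadowing_around_def, rule_format, OF e2] that by blast
  qed
  define \<alpha> where "\<alpha> = min (d0 / 8) (\<epsilon> / 2)"
  have al: "\<alpha> > 0" unfolding \<alpha>_def using d0 ep by auto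
  have MX: "?M \<subseteq> X" unfolding minimal_points_def by auto
  have CX: "closure ?M \<subseteq> X" using closure_minimal[OF MX] compact_imp_closed[OF cX] by blast
  show "\<exists>\<delta>>0. \<forall>xs. (\<forall>i. xs i \<in> closure ?M) \<and> (\<forall>i. dist (f (xs i)) (xs (Suc i)) \<le> \<delta>) \<longrightarrow>
          (\<exists>x\<in>closure ?M. \<forall>i. dist (xs i) ((f ^^ i) x) \<le> \<epsilon>)"
  proof (intro exI[of _ "d0 / 2"] conjI allI impI)
    show "d0 / 2 > 0" using d0 by simp
    fix xs assume xs: "(\<forall>i. xs i \<in> closure ?M) \<and> (\<forall>i. dist (f (xs i)) (xs (Suc i)) \<le> d0 / 2)"
    have "\<exists>y. y \<in> ?M \<and> dist y (xs i) < \<alpha> \<and> dist (f y) (f (xs i)) < \<alpha>" for i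
    proof -
      have xi: "xs i \<in> X" using xs CX by auto
      obtain d where d: "d > 0" "\<forall>x'\<in>X. dist x' (xs i) < d \<longrightarrow> dist (f x') (f (xs i)) < \<alpha>"
        using cf[unfolded continuous_on_iff, rule_format, OF xi al] by blast
      have md: "min d \<alpha> > 0" using d al by simp
      have xic: "xs i \<in> closure ?M" using xs by blast
      obtain y where y: "y \<in> ?M" "dist y (xs i) < min d \<alpha>"
        using xic[unfolded closure_approachable, rule_format, OF md] by blast
      then show ?thesis using d MX by auto
    qed
    then obtain p where p: "\<And>i. p i \<in> ?M" "\<And>i. dist (p i) (xs i) < \<alpha>" "\<And>i. dist (f (p i)) (f (xs i)) < \<alpha>"
      by metis
    have pj: "\<forall>i. dist (f (p i)) (p (Suc i)) \<le> 2 * \<alpha> + d0 / 2"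
    proof
      fix i
      have t1: "dist (f (p i)) (p (Suc i)) \<le> dist (f (p i)) (f (xs i)) + dist (f (xs i)) (p (Suc i))"
        by (rule dist_triangle)
      have t2: "dist (f (xs i)) (p (Suc i)) \<le> dist (f (xs i)) (xs (Suc i)) + dist (xs (Suc i)) (p (Suc i))"
        by (rule dist_triangle)
      have "dist (f (p i)) (p (Suc i)) \<le> dist (f (p i)) (f (xs i)) + dist (f (xs i)) (xs (Suc i)) + dist (xs (Suc i)) (p (Suc i))"
        using t1 t2 by linarith
      moreover have "dist (f (xs i)) (xs (Suc i)) \<le> d0 / 2" using xs by blast
      moreover have "dist (xs (Suc i)) (p (Suc i)) < \<alpha>" using p(2)[of "Suc i"] by (simp add: dist_commute)
      ultimately show "dist (f (p i)) (p (Suc i)) \<le> 2 * \<alpha> + d0 / 2"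
        using p(3)[of i] by linarith
    qed
    have "\<forall>N. \<exists>w\<in>?M. \<forall>i\<le>N. dist (p i) ((f ^^ i) w) \<le> \<epsilon> / 2"
    proof
      fix N
      show "\<exists>w\<in>?M. \<forall>i\<le>N. dist (p i) ((f ^^ i) w) \<le> \<epsilon> / 2"
        by (rule finite_shadow[OF cX cf fX d0(2), of p "2 * \<alpha> + d0 / 2" "d0 / 4" N])
           (use p pj d0 al in \<open>auto simp: \<alpha>_def\<close>)
    qed
    then have "\<forall>N. \<exists>w\<in>?M. \<forall>i\<le>N. dist (xs i) ((f ^^ i) w) \<le> \<epsilon>"
    proof (intro allI)
      fix N assume H: "\<forall>N. \<exists>w\<in>?M. \<forall>i\<le>N. dist (p i) ((f ^^ i) w) \<le> \<epsilon> / 2"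
      then obtain w where w: "w \<in> ?M" "\<forall>i\<le>N. dist (p i) ((f ^^ i) w) \<le> \<epsilon> / 2" by blast
      have "dist (xs i) ((f ^^ i) w) \<le> \<epsilon>" if "i \<le> N" for i
      proof -
        have "dist (xs i) ((f ^^ i) w) \<le> dist (xs i) (p i) + dist (p i) ((f ^^ i) w)" by (rule dist_triangle)
        moreover have "dist (xs i) (p i) < \<epsilon> / 2" using p(2)[of i] unfolding \<alpha>_def by (simp add: dist_commute)
        ultimately show ?thesis using w that by auto
      qed
      then show "\<exists>w\<in>?M. \<forall>i\<le>N. dist (xs i) ((f ^^ i) w) \<le> \<epsilon>" using w by blast
    qed
    then show "\<exists>x\<in>closure ?M. \<forall>i. dist (xs i) ((f ^^ i) x) \<le> \<epsilon>"
      by (rule limit_step[OF cX cf fX])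
  qed
qed

end
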